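(* Let $M$ be a regular indecomposable module which is a source module with center $c$ and radius $r$. Then $\sigma M$ is a source module with center $c$ and radius $r+1$.
   Context: Let $k$ be a field and $n\ge 3$. $T(n)$ is the $n$-regular tree; fix a bipartite orientation $\Omega$ (every vertex a sink or a source), $\sigma\Omega$ the opposite orientation. A module is a finite-dimensional $k$-representation of $(T(n),\Omega)$ or $(T(n),\sigma\Omega)$. The shift functor $\sigma$ is the composition of the Bernstein–Gelfand–Ponomarev reflection functors at all sinks, sending representations of $(T(n),\Omega)$ to representations of $(T(n),\sigma\Omega)$ and vice versa. An indecomposable module $M$ is regular if $\sigma^tM\neq 0$ for all $t\in\mathbb Z$ ($\sigma^t$ for $t<0$ being powers of the left adjoint $\sigma^-$). A path of length $t$ is a sequence $(a_0,\dots,a_t)$ of vertices, consecutive ones neighbours, with $a_{i-1}\neq a_{i+1}$; a path of length $2r$ has center $a_r$, radius $r$. For indecomposable $M$, $T(M)$ is the full subgraph on vertices $a$ with $M_a\neq0$; a diameter path is a path in $T(M)$ of maximal length $d(M)$; all diameter paths share a center, the center of $M$; $r(M)=\lfloor d(M)/2\rfloor$. $M$ is a source module if its diameter paths start and end at sources of the orientation of the quiver of which $M$ is a representation. *)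

theory Defs
  imports Main
begin

text \<open>A path (a_0,...,a_t) is a nonempty list of vertices, consecutive ones adjacent,
  with a_(i-1) different from a_(i+1); its length is t = length p - 1.\<close>

definition is_path :: "('v \<Rightarrow> 'v \<Rightarrow> bool) \<Rightarrow> 'v list \<Rightarrow> bool" where
  "is_path adj p \<longleftrightarrow> p \<noteq> [] \<and>
     (\<forall>i. Suc i < length p \<longrightarrow> adj (p ! i) (p ! Suc i)) \<and>
     (\<forall>i. Suc (Suc i) < length p \<longrightarrow> p ! i \<noteq> p ! Suc (Suc i))"

definition regular_tree :: "('v \<Rightarrow> 'v \<Rightarrow> bool) \<Rightarrow> nat \<Rightarrow> bool" where
  "regular_tree adj n \<longleftrightarrow>
     (\<forall>a b. adj a b \<longrightarrow> adj b a) \<and>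
     (\<forall>a. \<not> adj a a) \<and>
     (\<forall>a. finite {b. adj a b} \<and> card {b. adj a b} = n) \<and>
     (\<forall>a b. adj\<^sup>*\<^sup>* a b) \<and>
     \<not> (\<exists>p. is_path adj p \<and> length p \<ge> 2 \<and> hd p = last p)"

text \<open>A bipartite orientation is encoded by snk :: 'v => bool (snk a = True iff a is a sink);
  adjacent vertices have different type, and the arrows are a -> b for adj a b with snk b.
  The opposite orientation is (\<lambda>v. \<not> snk v).\<close>

definition bipartite_orientation :: "('v \<Rightarrow> 'v \<Rightarrow> bool) \<Rightarrow> ('v \<Rightarrow> bool) \<Rightarrow> bool" where
  "bipartite_orientation adj snk \<longleftrightarrow> (\<forall>a b. adj a b \<longrightarrow> snk a \<noteq> snk b)"

definition arrow :: "('v \<Rightarrow> 'v \<Rightarrow> bool) \<Rightarrow> ('v \<Rightarrow> bool) \<Rightarrow> 'v \<Rightarrow> 'v \<Rightarrow> bool" where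
  "arrow adj snk a b \<longleftrightarrow> adj a b \<and> snk b"

text \<open>k^d is modelled as the functions nat => k vanishing from d on; a linear map k^m -> k^l
  is an l x m matrix, i.e. a function nat => nat => k (entries outside the range are 0).\<close>

definition vecs :: "nat \<Rightarrow> (nat \<Rightarrow> 'k::field) set" where
  "vecs d = {x. \<forall>i\<ge>d. x i = 0}"

definition mv :: "(nat \<Rightarrow> nat \<Rightarrow> 'k::field) \<Rightarrow> nat \<Rightarrow> (nat \<Rightarrow> 'k) \<Rightarrow> (nat \<Rightarrow> 'k)" where
  "mv A m x = (\<lambda>i. \<Sum>j<m. A i j * x j)"

definition subspace_of :: "nat \<Rightarrow> (nat \<Rightarrow> 'k::field) set \<Rightarrow> bool" where
  "subspace_of d U \<longleftrightarrow> U \<subseteq> vecs d \<and> (\<lambda>_. 0) \<in> U \<and>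
     (\<forall>x\<in>U. \<forall>y\<in>U. (\<lambda>i. x i + y i) \<in> U) \<and>
     (\<forall>c. \<forall>x\<in>U. (\<lambda>i. c * x i) \<in> U)"

text \<open>A finite-dimensional representation: M_a = k^(dim a), and for an arrow a -> b the
  linear map M_a -> M_b is the matrix mp b a (target first).\<close>

record ('v, 'k) rep =
  dim :: "'v \<Rightarrow> nat"
  mp  :: "'v \<Rightarrow> 'v \<Rightarrow> nat \<Rightarrow> nat \<Rightarrow> 'k"

definition rep_wf :: "('v \<Rightarrow> 'v \<Rightarrow> bool) \<Rightarrow> ('v \<Rightarrow> bool) \<Rightarrow> ('v, 'k::field) rep \<Rightarrow> bool" where
  "rep_wf adj snk M \<longleftrightarrow> finite {a. dim M a \<noteq> 0} \<and>
     (\<forall>b a i j. (\<not> arrow adj snk a b \<or> dim M b \<le> i \<or> dim M a \<le> j) \<longrightarrow> mp M b a i j = 0)"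

definition zero_rep :: "('v, 'k) rep \<Rightarrow> bool" where
  "zero_rep M \<longleftrightarrow> (\<forall>a. dim M a = 0)"

definition decomposable :: "('v \<Rightarrow> 'v \<Rightarrow> bool) \<Rightarrow> ('v \<Rightarrow> bool) \<Rightarrow> ('v, 'k::field) rep \<Rightarrow> bool" where
  "decomposable adj snk M \<longleftrightarrow> (\<exists>U W.
     (\<forall>a. subspace_of (dim M a) (U a) \<and> subspace_of (dim M a) (W a) \<and>
          U a \<inter> W a = {\<lambda>_. 0} \<and>
          (\<forall>x\<in>vecs (dim M a). \<exists>u\<in>U a. \<exists>w\<in>W a. x = (\<lambda>i. u i + w i))) \<and>
     (\<forall>a b. arrow adj snk a b \<longrightarrow>
          (\<forall>x\<in>U a. mv (mp M b a) (dim M a) x \<in> U b) \<and>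
          (\<forall>x\<in>W a. mv (mp M b a) (dim M a) x \<in> W b)) \<and>
     (\<exists>a. U a \<noteq> {\<lambda>_. 0}) \<and> (\<exists>a. W a \<noteq> {\<lambda>_. 0}))"

definition indecomposable :: "('v \<Rightarrow> 'v \<Rightarrow> bool) \<Rightarrow> ('v \<Rightarrow> bool) \<Rightarrow> ('v, 'k::field) rep \<Rightarrow> bool" where
  "indecomposable adj snk M \<longleftrightarrow> \<not> zero_rep M \<and> \<not> decomposable adj snk M"

text \<open>shift adj snk M N: N (a representation of the opposite orientation) is sigma M,
  the composition of the BGP reflection functors at all sinks. At a source a of snk,
  N_a = M_a; at a sink b, N_b together with the maps N_b -> M_a (a neighbour of b),
  given by the matrices mp N a b, is a kernel of the map (x_a) |-> sum_a M_(b,a) x_a from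
  the direct sum of the M_a to M_b. (The reflection is determined up to isomorphism, and
  every N satisfying this is such a choice.)\<close>

definition shift :: "('v \<Rightarrow> 'v \<Rightarrow> bool) \<Rightarrow> ('v \<Rightarrow> bool) \<Rightarrow> ('v, 'k::field) rep \<Rightarrow> ('v, 'k) rep \<Rightarrow> bool" where
  "shift adj snk M N \<longleftrightarrow> rep_wf adj (\<lambda>v. \<not> snk v) N \<and>
     (\<forall>a. \<not> snk a \<longrightarrow> dim N a = dim M a) \<and>
     (\<forall>b. snk b \<longrightarrow>
        (\<forall>y\<in>vecs (dim N b).
           (\<lambda>i. \<Sum>a\<in>{a. adj a b}. mv (mp M b a) (dim M a) (mv (mp N a b) (dim N b) y) i)
             = (\<lambda>_. 0)) \<and>
        (\<forall>y\<in>vecs (dim N b).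
           (\<forall>a. adj a b \<longrightarrow> mv (mp N a b) (dim N b) y = (\<lambda>_. 0)) \<longrightarrow> y = (\<lambda>_. 0)) \<and>
        (\<forall>x. (\<forall>a. adj a b \<longrightarrow> x a \<in> vecs (dim M a)) \<longrightarrow>
           (\<lambda>i. \<Sum>a\<in>{a. adj a b}. mv (mp M b a) (dim M a) (x a) i) = (\<lambda>_. 0) \<longrightarrow>
           (\<exists>y\<in>vecs (dim N b). \<forall>a. adj a b \<longrightarrow> mv (mp N a b) (dim N b) y = x a)))"

text \<open>unshift adj snk M N: N is sigma^- M, the composition of the reflection functors at all
  sources: at a sink b of snk, N_b = M_b; at a source a, N_a together with the maps
  M_b -> N_a (b neighbour of a), given by mp N a b, is a cokernel of the map
  x |-> (M_(b,a) x)_b from M_a to the direct sum of the M_b.\<close>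

definition unshift :: "('v \<Rightarrow> 'v \<Rightarrow> bool) \<Rightarrow> ('v \<Rightarrow> bool) \<Rightarrow> ('v, 'k::field) rep \<Rightarrow> ('v, 'k) rep \<Rightarrow> bool" where
  "unshift adj snk M N \<longleftrightarrow> rep_wf adj (\<lambda>v. \<not> snk v) N \<and>
     (\<forall>b. snk b \<longrightarrow> dim N b = dim M b) \<and>
     (\<forall>a. \<not> snk a \<longrightarrow>
        (\<forall>x\<in>vecs (dim M a).
           (\<lambda>i. \<Sum>b\<in>{b. adj a b}. mv (mp N a b) (dim M b) (mv (mp M b a) (dim M a) x) i)
             = (\<lambda>_. 0)) \<and>
        (\<forall>z\<in>vecs (dim N a). \<exists>y. (\<forall>b. adj a b \<longrightarrow> y b \<in> vecs (dim M b)) \<and>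
           z = (\<lambda>i. \<Sum>b\<in>{b. adj a b}. mv (mp N a b) (dim M b) (y b) i)) \<and>
        (\<forall>y. (\<forall>b. adj a b \<longrightarrow> y b \<in> vecs (dim M b)) \<longrightarrow>
           (\<lambda>i. \<Sum>b\<in>{b. adj a b}. mv (mp N a b) (dim M b) (y b) i) = (\<lambda>_. 0) \<longrightarrow>
           (\<exists>x\<in>vecs (dim M a). \<forall>b. adj a b \<longrightarrow> y b = mv (mp M b a) (dim M a) x)))"

inductive shifts :: "('v \<Rightarrow> 'v \<Rightarrow> bool) \<Rightarrow> ('v \<Rightarrow> bool) \<Rightarrow> ('v, 'k::field) rep \<Rightarrow> nat \<Rightarrow>
    ('v \<Rightarrow> bool) \<Rightarrow> ('v, 'k) rep \<Rightarrow> bool" for adj snk M where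
  shifts_0: "shifts adj snk M 0 snk M"
| shifts_Suc: "shifts adj snk M t snk' N \<Longrightarrow> shift adj snk' N N' \<Longrightarrow>
    shifts adj snk M (Suc t) (\<lambda>v. \<not> snk' v) N'"

inductive unshifts :: "('v \<Rightarrow> 'v \<Rightarrow> bool) \<Rightarrow> ('v \<Rightarrow> bool) \<Rightarrow> ('v, 'k::field) rep \<Rightarrow> nat \<Rightarrow>
    ('v \<Rightarrow> bool) \<Rightarrow> ('v, 'k) rep \<Rightarrow> bool" for adj snk M where
  unshifts_0: "unshifts adj snk M 0 snk M"
| unshifts_Suc: "unshifts adj snk M t snk' N \<Longrightarrow> unshift adj snk' N N' \<Longrightarrow>
    unshifts adj snk M (Suc t) (\<lambda>v. \<not> snk' v) N'"

definition regular :: "('v \<Rightarrow> 'v \<Rightarrow> bool) \<Rightarrow> ('v \<Rightarrow> bool) \<Rightarrow> ('v, 'k::field) rep \<Rightarrow> bool" where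
  "regular adj snk M \<longleftrightarrow> indecomposable adj snk M \<and>
     (\<forall>t snk' N. shifts adj snk M t snk' N \<longrightarrow> \<not> zero_rep N) \<and>
     (\<forall>t snk' N. unshifts adj snk M t snk' N \<longrightarrow> \<not> zero_rep N)"

definition tpath :: "('v \<Rightarrow> 'v \<Rightarrow> bool) \<Rightarrow> ('v, 'k) rep \<Rightarrow> 'v list \<Rightarrow> bool" where
  "tpath adj M p \<longleftrightarrow> is_path adj p \<and> (\<forall>a\<in>set p. dim M a \<noteq> 0)"

definition diam_path :: "('v \<Rightarrow> 'v \<Rightarrow> bool) \<Rightarrow> ('v, 'k) rep \<Rightarrow> 'v list \<Rightarrow> bool" where
  "diam_path adj M p \<longleftrightarrow> tpath adj M p \<and> (\<forall>q. tpath adj M q \<longrightarrow> length q \<le> length p)"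

definition source_module :: "('v \<Rightarrow> 'v \<Rightarrow> bool) \<Rightarrow> ('v \<Rightarrow> bool) \<Rightarrow> ('v, 'k::field) rep \<Rightarrow>
    'v \<Rightarrow> nat \<Rightarrow> bool" where
  "source_module adj snk M c r \<longleftrightarrow> indecomposable adj snk M \<and>
     (\<exists>p. diam_path adj M p) \<and>
     (\<forall>p. diam_path adj M p \<longrightarrow>
        length p = 2 * r + 1 \<and> p ! r = c \<and> \<not> snk (hd p) \<and> \<not> snk (last p))"

end

theory Submission
  imports Defs
begin

fun ip :: "('v \<Rightarrow> 'v \<Rightarrow> bool) \<Rightarrow> 'v list \<Rightarrow> bool" where
  "ip adj [] = False"
| "ip adj [x] = True"
| "ip adj (x # y # zs) = (adj x y \<and> (case zs of [] \<Rightarrow> True | z # _ \<Rightarrow> x \<noteq> z) \<and> ip adj (y # zs))"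

lemma all_nat_split: "(\<forall>i::nat. P i) = (P 0 \<and> (\<forall>i. P (Suc i)))"
  by (metis not0_implies_Suc)

lemma is_path_Cons2: "is_path adj (x # y # zs) \<longleftrightarrow>
   adj x y \<and> (case zs of [] \<Rightarrow> True | z # _ \<Rightarrow> x \<noteq> z) \<and> is_path adj (y # zs)"
  unfolding is_path_def
  apply (subst all_nat_split)
  apply (subst (2) all_nat_split)
  apply (cases zs)
   apply (auto simp: nth_Cons)
  done

lemma is_path_ip: "is_path adj p \<longleftrightarrow> ip adj p"
proof (induction adj p rule: ip.induct)
  case (1 adj)
  then show ?case by (simp add: is_path_def)
next
  case (2 adj x)
  then show ?case by (simp add: is_path_def)
next
  case (3 adj x y zs)
  then show ?case by (simp add: is_path_Cons2)
qed

lemma ip_snoc: "ip adj p \<Longrightarrow> adj (last p) y \<Longrightarrow> (length p \<ge> 2 \<Longrightarrow> last (butlast p) \<noteq> y)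
   \<Longrightarrow> ip adj (p @ [y])"
proof (induction adj p rule: ip.induct)
  case (1 adj)
  then show ?case by simp
next
  case (2 adj x)
  then show ?case by simp
next
  case (3 adj x y' zs)
  then show ?case by (cases zs) auto
qed

lemma ip_Cons: "ip adj p \<Longrightarrow> adj y (hd p) \<Longrightarrow> (length p \<ge> 2 \<Longrightarrow> p ! 1 \<noteq> y) \<Longrightarrow> ip adj (y # p)"
  by (cases p; cases "tl p") auto

lemma ip_butlast: "ip adj p \<Longrightarrow> length p \<ge> 2 \<Longrightarrow> ip adj (butlast p)"
proof (induction adj p rule: ip.induct)
  case (3 adj x y zs)
  then show ?case by (cases zs) auto
qed auto

inductive reach :: "('v \<Rightarrow> 'v \<Rightarrow> bool) \<Rightarrow> ('v \<Rightarrow> bool) \<Rightarrow> 'v \<Rightarrow> 'v \<Rightarrow> bool"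
  for adj P where
  reach_refl: "P x \<Longrightarrow> reach adj P x x"
| reach_step: "reach adj P x y \<Longrightarrow> adj y z \<Longrightarrow> P z \<Longrightarrow> reach adj P x z"

lemma reach_path: "reach adj P x y \<Longrightarrow> \<exists>p. ip adj p \<and> hd p = x \<and> last p = y \<and> (\<forall>v\<in>set p. P v)"
proof (induction rule: reach.induct)
  case (reach_refl x)
  then show ?case by (intro exI[of _ "[x]"]) auto
next
  case (reach_step x y z)
  then obtain p where p: "ip adj p" "hd p = x" "last p = y" "\<forall>v\<in>set p. P v" by blast
  have ne: "p \<noteq> []" using p(1) by (cases p) auto
  show ?case
  proof (cases "length p \<ge> 2 \<and> last (butlast p) = z")
    case True
    have "ip adj (butlast p)" using ip_butlast p(1) True by blast
    moreover have "hd (butlast p) = x" using True p(2)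
      by (cases p; cases "tl p") auto
    moreover have "\<forall>v\<in>set (butlast p). P v" using p(4) in_set_butlastD by fast
    ultimately show ?thesis using True by blast
  next
    case False
    have "ip adj (p @ [z])" using ip_snoc[OF p(1)] p(3) reach_step False by auto
    then show ?thesis using p ne reach_step by (intro exI[of _ "p @ [z]"]) auto
  qed
qed

lemma reach_sym_step: "(\<forall>a b. adj a b \<longrightarrow> adj b a) \<Longrightarrow> reach adj P x y \<Longrightarrow> adj y z \<Longrightarrow> P z \<Longrightarrow> reach adj P x z"
  by (rule reach_step)

lemma no_cycle:
  assumes tree: "regular_tree adj n"
    and nb: "\<not> P b" and ab: "adj b a" "adj b a'" and P: "P a" "P a'" and ne: "a \<noteq> a'"
    and r: "reach adj P a a'"
  shows False
proof -
  have sym: "\<And>x y. adj x y \<Longrightarrow> adj y x" using tree unfolding regular_tree_def by blast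
  obtain p where p: "ip adj p" "hd p = a" "last p = a'" "\<forall>v\<in>set p. P v"
    using reach_path[OF r] by blast
  have ne': "p \<noteq> []" using p(1) by (cases p) auto
  have len: "length p \<ge> 2"
  proof (rule ccontr)
    assume "\<not> length p \<ge> 2"
    then obtain v where "p = [v]" using ne' by (cases p; cases "tl p") auto
    then show False using p ne by simp
  qed
  have 1: "ip adj (p @ [b])"
  proof (rule ip_snoc[OF p(1)])
    show "adj (last p) b" using p(3) ab sym by simp
    show "last (butlast p) \<noteq> b" if "length p \<ge> 2"
    proof -
      have "butlast p \<noteq> []" using that by (cases p) auto
      then have "last (butlast p) \<in> set p" using in_set_butlastD last_in_set by fast
      then show ?thesis using p(4) nb by auto
    qed
  qed
  have 2: "ip adj (b # (p @ [b]))"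
  proof (rule ip_Cons[OF 1])
    show "adj b (hd (p @ [b]))" using ne' p(2) ab by simp
    show "(p @ [b]) ! 1 \<noteq> b"
    proof -
      have "(p @ [b]) ! 1 = p ! 1" using len by (simp add: nth_append)
      moreover have "p ! 1 \<in> set p" using len by simp
      ultimately show ?thesis using p(4) nb by auto
    qed
  qed
  have "is_path adj (b # (p @ [b]))" using 2 is_path_ip by metis
  moreover have "length (b # (p @ [b])) \<ge> 2" by simp
  moreover have "hd (b # (p @ [b])) = last (b # (p @ [b]))" by simp
  ultimately show False using tree unfolding regular_tree_def by blast
qed


lemma mv_zero: "mv A m (\<lambda>_. 0) = (\<lambda>_. (0::'k::field))"
  by (simp add: mv_def)

lemma mv_add: "mv A m (\<lambda>i. x i + y i) = (\<lambda>i. mv A m x i + mv A m y i)"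
  by (simp add: mv_def distrib_left sum.distrib)

lemma mv_diff: "mv A m (\<lambda>i. x i - y i) = (\<lambda>i. mv A m x i - mv A m y i)"
  by (simp add: mv_def right_diff_distrib sum_subtractf)

lemma mv_scale: "mv A m (\<lambda>i. c * x i) = (\<lambda>i. c * mv A m x i)"
  by (simp add: mv_def sum_distrib_left algebra_simps)

lemma mv_dim0: "mv A 0 y = (\<lambda>_. 0)"
  by (simp add: mv_def)

lemma mv_vecs: "rep_wf adj snk M \<Longrightarrow> mv (mp M b a) m x \<in> vecs (dim M b)"
  unfolding rep_wf_def vecs_def mv_def by auto

lemma zero_vecs[simp]: "(\<lambda>_. 0) \<in> vecs d"
  by (simp add: vecs_def)

lemma vecs_0: "vecs 0 = {\<lambda>_. 0}"
  by (auto simp: vecs_def)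

lemma e0_vecs: "d \<noteq> 0 \<Longrightarrow> (\<lambda>i. if i = 0 then 1 else 0) \<in> vecs d"
  by (auto simp: vecs_def)

lemma e0_ne: "(\<lambda>i. if i = 0 then (1::'k::field) else 0) \<noteq> (\<lambda>_. 0)"
  by (metis one_neq_zero)

lemma subspace_vecs: "subspace_of d (vecs d :: (nat \<Rightarrow> 'k::field) set)"
  by (auto simp: subspace_of_def vecs_def)

lemma subspace_zero: "subspace_of d {\<lambda>_. 0 :: 'k::field}"
  by (auto simp: subspace_of_def)

lemma vecs_mono: "d \<le> d' \<Longrightarrow> vecs d \<subseteq> vecs d'"
  by (auto simp: vecs_def)

lemma reach_P2: "reach adj P x y \<Longrightarrow> P y"
  by (induction rule: reach.induct) auto

lemma connected_support:
  fixes M :: "('v, 'k::field) rep"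
  assumes wf: "rep_wf adj snk M" and ind: "indecomposable adj snk M"
    and sym: "\<And>x y. adj x y \<Longrightarrow> adj y x"
    and a: "dim M a \<noteq> 0" and a': "dim M a' \<noteq> 0"
  shows "reach adj (\<lambda>v. dim M v \<noteq> 0) a a'"
proof (rule ccontr)
  assume nr: "\<not> reach adj (\<lambda>v. dim M v \<noteq> 0) a a'"
  define S where "S = {y. reach adj (\<lambda>v. dim M v \<noteq> 0) a y}"
  define U where "U v = (if v \<in> S then vecs (dim M v) else {\<lambda>_. 0 :: 'k})" for v
  define W where "W v = (if v \<in> S then {\<lambda>_. 0 :: 'k} else vecs (dim M v))" for v
  have Ssupp: "dim M v \<noteq> 0" if "v \<in> S" for v
    using that unfolding S_def using reach_P2 by fastforce
  have H1: "subspace_of (dim M v) (U v) \<and> subspace_of (dim M v) (W v) \<and> U v \<inter> W v = {\<lambda>_. 0} \<and>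
     (\<forall>x\<in>vecs (dim M v). \<exists>u\<in>U v. \<exists>w\<in>W v. x = (\<lambda>i. u i + w i))" for v
  proof (intro conjI ballI)
    show "subspace_of (dim M v) (U v)" "subspace_of (dim M v) (W v)"
      unfolding U_def W_def by (auto simp: subspace_vecs subspace_zero)
    show "U v \<inter> W v = {\<lambda>_. 0}" unfolding U_def W_def by auto
    fix x :: "nat \<Rightarrow> 'k" assume "x \<in> vecs (dim M v)"
    then show "\<exists>u\<in>U v. \<exists>w\<in>W v. x = (\<lambda>i. u i + w i)"
      unfolding U_def W_def by (cases "v \<in> S") auto
  qed
  have H2: "mv (mp M b1 a1) (dim M a1) x \<in> U b1" if ar: "arrow adj snk a1 b1" and x: "x \<in> U a1" for a1 b1 x
  proof -
    have adj: "adj a1 b1" using ar by (simp add: arrow_def)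
    show "mv (mp M b1 a1) (dim M a1) x \<in> U b1"
    proof (cases "a1 \<in> S")
      case True
      show ?thesis
      proof (cases "b1 \<in> S")
        case True then show ?thesis using mv_vecs[OF wf] by (simp add: U_def)
      next
        case False
        have "dim M b1 = 0"
        proof (rule ccontr)
          assume d: "dim M b1 \<noteq> 0"
          have r: "reach adj (\<lambda>v. dim M v \<noteq> 0) a a1" using \<open>a1 \<in> S\<close> unfolding S_def by simp
          have "reach adj (\<lambda>v. dim M v \<noteq> 0) a b1" using reach_step[OF r adj] d by simp
          then show False using False unfolding S_def by simp
        qed
        then show ?thesis using mv_vecs[OF wf, of b1 a1] False by (simp add: U_def vecs_0)
      qed
    next
      case False
      then have "x = (\<lambda>_. 0)" using x by (simp add: U_def)
      then show ?thesis by (simp add: mv_zero U_def subspace_zero)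
    qed
  qed
  have H3: "mv (mp M b1 a1) (dim M a1) x \<in> W b1" if ar: "arrow adj snk a1 b1" and x: "x \<in> W a1" for a1 b1 x
  proof -
    have adj: "adj a1 b1" using ar by (simp add: arrow_def)
    show "mv (mp M b1 a1) (dim M a1) x \<in> W b1"
    proof (cases "a1 \<in> S")
      case True
      then have "x = (\<lambda>_. 0)" using x by (simp add: W_def)
      then show ?thesis by (simp add: mv_zero W_def)
    next
      case False
      show ?thesis
      proof (cases "b1 \<in> S")
        case False then show ?thesis using mv_vecs[OF wf] by (simp add: W_def)
      next
        case True
        have "dim M a1 = 0"
        proof (rule ccontr)
          assume "dim M a1 \<noteq> 0"
          note d = this
          have r: "reach adj (\<lambda>v. dim M v \<noteq> 0) a b1" using True unfolding S_def by simp
          have "reach adj (\<lambda>v. dim M v \<noteq> 0) a a1" using reach_step[OF r sym[OF adj]] d by simp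
          then have "a1 \<in> S" unfolding S_def by simp
          then show False using \<open>a1 \<notin> S\<close> by simp
        qed
        then have "x = (\<lambda>_. 0)" using x False by (simp add: W_def vecs_0)
        then show ?thesis by (simp add: mv_zero W_def)
      qed
    qed
  qed
  have H4: "\<exists>v. U v \<noteq> {\<lambda>_. 0}"
  proof -
    have "a \<in> S" unfolding S_def using a by (simp add: reach_refl)
    then have "(\<lambda>i. if i = 0 then 1 else 0) \<in> U a" using e0_vecs[OF a] by (simp add: U_def)
    then show "\<exists>v. U v \<noteq> {\<lambda>_. 0}" using e0_ne by blast
  qed
  have H5: "\<exists>v. W v \<noteq> {\<lambda>_. 0}"
  proof -
    have "a' \<notin> S" unfolding S_def using nr by simp
    then have "(\<lambda>i. if i = 0 then 1 else 0) \<in> W a'" using e0_vecs[OF a'] by (simp add: W_def)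
    then show "\<exists>v. W v \<noteq> {\<lambda>_. 0}" using e0_ne by blast
  qed
  have "decomposable adj snk M"
    unfolding decomposable_def
    apply (rule exI[of _ U], rule exI[of _ W], intro conjI)
    subgoal by (intro allI, rule H1)
    subgoal using H2 H3 by blast
    subgoal by (rule H4)
    subgoal by (rule H5)
    done
  then show False using ind by (simp add: indecomposable_def)
qed

lemma subD:
  assumes "subspace_of d U"
  shows subD_sub: "U \<subseteq> vecs d" and subD_0: "(\<lambda>_. 0) \<in> U"
    and subD_add: "\<And>x y. x \<in> U \<Longrightarrow> y \<in> U \<Longrightarrow> (\<lambda>i. x i + y i) \<in> U"
    and subD_scale: "\<And>c x. x \<in> U \<Longrightarrow> (\<lambda>i. c * x i) \<in> U"
  using assms unfolding subspace_of_def by auto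

lemma subI:
  assumes "U \<subseteq> vecs d" "(\<lambda>_. 0) \<in> U"
    "\<And>x y. x \<in> U \<Longrightarrow> y \<in> U \<Longrightarrow> (\<lambda>i. x i + y i) \<in> U"
    "\<And>c x. x \<in> U \<Longrightarrow> (\<lambda>i. c * x i) \<in> U"
  shows "subspace_of d U"
  using assms unfolding subspace_of_def by auto

lemma vecsD: "x \<in> vecs d \<Longrightarrow> d \<le> j \<Longrightarrow> x j = 0"
  by (simp add: vecs_def)


lemma complement:
  fixes I :: "(nat \<Rightarrow> 'k::field) set"
  shows "subspace_of d I \<Longrightarrow> \<exists>C. subspace_of d C \<and> I \<inter> C = {\<lambda>_. 0} \<and>
     (\<forall>x\<in>vecs d. \<exists>i\<in>I. \<exists>c\<in>C. x = (\<lambda>j. i j + c j))"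
proof (induction d arbitrary: I)
  case 0
  have "I \<subseteq> {\<lambda>_. 0}" using subD_sub[OF 0] by (simp add: vecs_0)
  then have "I = {\<lambda>_. 0}" using subD_0[OF 0] by blast
  then show ?case by (intro exI[of _ "{\<lambda>_. 0}"]) (auto simp: subspace_zero vecs_0)
next
  case (Suc d)
  note sI = Suc.prems
  define I0 where "I0 = I \<inter> vecs d"
  have sI0: "subspace_of d I0"
  proof (rule subI)
    show "I0 \<subseteq> vecs d" unfolding I0_def by blast
    show "(\<lambda>_. 0) \<in> I0" unfolding I0_def using subD_0[OF sI] by simp
    show "(\<lambda>i. x i + y i) \<in> I0" if "x \<in> I0" "y \<in> I0" for x y
      using that subD_add[OF sI, of x y] unfolding I0_def by (auto simp: vecs_def)
    show "(\<lambda>i. c * x i) \<in> I0" if "x \<in> I0" for c x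
      using that subD_scale[OF sI, of x c] unfolding I0_def by (auto simp: vecs_def)
  qed
  obtain C0 where C0: "subspace_of d C0" "I0 \<inter> C0 = {\<lambda>_. 0}"
      "\<forall>x\<in>vecs d. \<exists>i\<in>I0. \<exists>c\<in>C0. x = (\<lambda>j. i j + c j)"
    using Suc.IH[OF sI0] by blast
  show ?case
  proof (cases "\<exists>v\<in>I. v d \<noteq> 0")
    case True
    then obtain v where v: "v \<in> I" "v d \<noteq> 0" by blast
    define v' where "v' = (\<lambda>j. inverse (v d) * v j)"
    have v'I: "v' \<in> I" using subD_scale[OF sI v(1)] unfolding v'_def .
    have v'd: "v' d = 1" using v(2) by (simp add: v'_def)
    show ?thesis
    proof (intro exI[of _ C0] conjI ballI)
      show "subspace_of (Suc d) C0"
        apply (rule subI)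
        using subD_sub[OF C0(1)] vecs_mono[of d "Suc d"] subD_0[OF C0(1)]
          subD_add[OF C0(1)] subD_scale[OF C0(1)] by auto
      show "I \<inter> C0 = {\<lambda>_. 0}"
      proof
        show "I \<inter> C0 \<subseteq> {\<lambda>_. 0}"
        proof
          fix x assume "x \<in> I \<inter> C0"
          then have "x \<in> I0 \<inter> C0" using subD_sub[OF C0(1)] unfolding I0_def by blast
          then show "x \<in> {\<lambda>_. 0}" using C0(2) by simp
        qed
        show "{\<lambda>_. 0} \<subseteq> I \<inter> C0" using subD_0[OF sI] subD_0[OF C0(1)] by simp
      qed
      fix x :: "nat \<Rightarrow> 'k" assume x: "x \<in> vecs (Suc d)"
      define x' where "x' = (\<lambda>j. x j - x d * v' j)"
      have "x' \<in> vecs d"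
        unfolding vecs_def
      proof (intro CollectI allI impI)
        fix j assume "d \<le> j"
        show "x' j = 0"
        proof (cases "j = d")
          case True then show ?thesis by (simp add: x'_def v'd)
        next
          case False
          then have "Suc d \<le> j" using \<open>d \<le> j\<close> by simp
          have "v' \<in> vecs (Suc d)" using subD_sub[OF sI] v'I by blast
          then have "x j = 0" "v' j = 0" using vecsD[OF x] vecsD \<open>Suc d \<le> j\<close> by auto
          then show ?thesis by (simp add: x'_def)
        qed
      qed
      then obtain i0 c0 where ic: "i0 \<in> I0" "c0 \<in> C0" "x' = (\<lambda>j. i0 j + c0 j)" using C0(3) by blast
      have "i0 \<in> I" using ic(1) unfolding I0_def by simp
      have "(\<lambda>j. x d * v' j) \<in> I" using subD_scale[OF sI v'I] .
      then have iI: "(\<lambda>j. i0 j + x d * v' j) \<in> I" using subD_add[OF sI \<open>i0 \<in> I\<close>] by simp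
      have eq: "x = (\<lambda>j. (i0 j + x d * v' j) + c0 j)"
      proof
        fix j
        have "x' j = i0 j + c0 j" using ic(3) by simp
        then show "x j = (i0 j + x d * v' j) + c0 j" by (simp add: x'_def algebra_simps)
      qed
      show "\<exists>i\<in>I. \<exists>c\<in>C0. x = (\<lambda>j. i j + c j)"
        apply (rule bexI[where x="\<lambda>j. i0 j + x d * v' j"])
         apply (rule bexI[where x=c0])
        using eq iI ic(2) by auto
    qed
  next
    case False
    have Isub: "I \<subseteq> vecs d"
    proof
      fix x assume x: "x \<in> I"
      show "x \<in> vecs d" unfolding vecs_def
      proof (intro CollectI allI impI)
        fix j assume "d \<le> j"
        show "x j = 0"
        proof (cases "j = d")
          case True then show ?thesis using False x by auto
        next
          case False
          then have "Suc d \<le> j" using \<open>d \<le> j\<close> by simp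
          then show ?thesis using vecsD subD_sub[OF sI] x by blast
        qed
      qed
    qed
    define e where "e = (\<lambda>j. if j = d then (1::'k) else 0)"
    define C where "C = {\<lambda>j. c j + t * e j | c t. c \<in> C0}"
    have memC: "(\<lambda>j. c j + t * e j) \<in> C" if "c \<in> C0" for c t
      unfolding C_def using that by blast
    have zC: "(\<lambda>_. 0) \<in> C"
      using memC[OF subD_0[OF C0(1)], of 0] by simp
    show ?thesis
    proof (intro exI[of _ C] conjI ballI)
      show "subspace_of (Suc d) C"
      proof (rule subI)
        show "C \<subseteq> vecs (Suc d)"
        proof
          fix x assume "x \<in> C"
          then obtain c t where "c \<in> C0" "x = (\<lambda>j. c j + t * e j)" unfolding C_def by blast
          then show "x \<in> vecs (Suc d)" using subD_sub[OF C0(1)] unfolding vecs_def e_def by auto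
        qed
        show "(\<lambda>_. 0) \<in> C" by (rule zC)
        fix x y assume "x \<in> C" "y \<in> C"
        then obtain c t c' t' where cc: "c \<in> C0" "c' \<in> C0" "x = (\<lambda>j. c j + t * e j)" "y = (\<lambda>j. c' j + t' * e j)"
          unfolding C_def by blast
        have "(\<lambda>j. c j + c' j) \<in> C0" using subD_add[OF C0(1) cc(1,2)] .
        moreover have "(\<lambda>i. x i + y i) = (\<lambda>j. (\<lambda>j. c j + c' j) j + (t + t') * e j)"
          using cc by (auto simp: algebra_simps)
        ultimately show "(\<lambda>i. x i + y i) \<in> C" using memC by metis
      next
        fix k x assume "x \<in> C"
        then obtain c t where cc: "c \<in> C0" "x = (\<lambda>j. c j + t * e j)"
          unfolding C_def by blast
        have "(\<lambda>j. k * c j) \<in> C0" using subD_scale[OF C0(1) cc(1)] .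
        moreover have "(\<lambda>i. k * x i) = (\<lambda>j. (\<lambda>j. k * c j) j + (k * t) * e j)"
          using cc by (auto simp: algebra_simps)
        ultimately show "(\<lambda>i. k * x i) \<in> C" using memC by metis
      qed
      show "I \<inter> C = {\<lambda>_. 0}"
      proof
        show "{\<lambda>_. 0} \<subseteq> I \<inter> C" using zC subD_0[OF sI] by simp
        show "I \<inter> C \<subseteq> {\<lambda>_. 0}"
        proof
          fix x assume x: "x \<in> I \<inter> C"
          then obtain c t where c: "c \<in> C0" "x = (\<lambda>j. c j + t * e j)" unfolding C_def by blast
          have "x d = 0" using x Isub vecsD by blast
          moreover have "c d = 0" using c(1) subD_sub[OF C0(1)] vecsD by blast
          ultimately have "t = 0" using c(2) by (simp add: e_def)
          then have "x = c" using c(2) by simp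
          then have "x \<in> I0 \<inter> C0" using x Isub c(1) unfolding I0_def by blast
          then show "x \<in> {\<lambda>_. 0}" using C0(2) by simp
        qed
      qed
      fix x :: "nat \<Rightarrow> 'k" assume x: "x \<in> vecs (Suc d)"
      define x' where "x' = (\<lambda>j. x j - x d * e j)"
      have "x' \<in> vecs d"
        unfolding vecs_def
      proof (intro CollectI allI impI)
        fix j assume "d \<le> j"
        show "x' j = 0"
        proof (cases "j = d")
          case True then show ?thesis by (simp add: x'_def e_def)
        next
          case False
          then have "Suc d \<le> j" using \<open>d \<le> j\<close> by simp
          then have "x j = 0" using vecsD[OF x] by blast
          then show ?thesis using False by (simp add: x'_def e_def)
        qed
      qed
      then obtain i0 c0 where ic: "i0 \<in> I0" "c0 \<in> C0" "x' = (\<lambda>j. i0 j + c0 j)" using C0(3) by blast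
      have cC: "(\<lambda>j. c0 j + x d * e j) \<in> C" using memC ic(2) by blast
      have eq: "x = (\<lambda>j. i0 j + (c0 j + x d * e j))"
      proof
        fix j
        have "x' j = i0 j + c0 j" using ic(3) by simp
        then show "x j = i0 j + (c0 j + x d * e j)" by (simp add: x'_def algebra_simps)
      qed
      have "i0 \<in> I" using ic(1) unfolding I0_def by simp
      then show "\<exists>i\<in>I. \<exists>c\<in>C. x = (\<lambda>j. i j + c j)"
        apply (rule bexI[where x=i0, rotated])
         apply (rule bexI[where x="\<lambda>j. c0 j + x d * e j"])
        using eq cC by auto
    qed
  qed
qed


definition Tm :: "('v \<Rightarrow> 'v \<Rightarrow> bool) \<Rightarrow> ('v, 'k::field) rep \<Rightarrow> 'v \<Rightarrow> ('v \<Rightarrow> nat \<Rightarrow> 'k) \<Rightarrow> nat \<Rightarrow> 'k" where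
  "Tm adj M b u = (\<lambda>i. \<Sum>a\<in>{a. adj a b}. mv (mp M b a) (dim M a) (u a) i)"

definition imgT :: "('v \<Rightarrow> 'v \<Rightarrow> bool) \<Rightarrow> ('v, 'k::field) rep \<Rightarrow> ('v \<Rightarrow> (nat \<Rightarrow> 'k) set) \<Rightarrow> 'v \<Rightarrow> (nat \<Rightarrow> 'k) set" where
  "imgT adj M V b = {Tm adj M b u | u. \<forall>a. adj a b \<longrightarrow> u a \<in> V a}"

definition ssum :: "(nat \<Rightarrow> 'k::field) set \<Rightarrow> (nat \<Rightarrow> 'k) set \<Rightarrow> (nat \<Rightarrow> 'k) set" where
  "ssum A B = {\<lambda>i. x i + y i | x y. x \<in> A \<and> y \<in> B}"

lemma imgT_mem: "(\<And>a. adj a b \<Longrightarrow> u a \<in> V a) \<Longrightarrow> Tm adj M b u \<in> imgT adj M V b"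
  unfolding imgT_def by blast

lemma imgT_E: "x \<in> imgT adj M V b \<Longrightarrow> \<exists>u. x = Tm adj M b u \<and> (\<forall>a. adj a b \<longrightarrow> u a \<in> V a)"
  unfolding imgT_def by blast

lemma ssum_mem: "x \<in> A \<Longrightarrow> y \<in> B \<Longrightarrow> (\<lambda>i. x i + y i) \<in> ssum A B"
  unfolding ssum_def by blast

lemma ssum_E: "z \<in> ssum A B \<Longrightarrow> \<exists>x y. x \<in> A \<and> y \<in> B \<and> z = (\<lambda>i. x i + y i)"
  unfolding ssum_def by blast

lemma Tm_cong: "(\<And>a. adj a b \<Longrightarrow> u a = u' a) \<Longrightarrow> Tm adj M b u = Tm adj M b u'"
  unfolding Tm_def by (intro ext sum.cong) auto

lemma Tm_add: "Tm adj M b (\<lambda>a i. u a i + w a i) = (\<lambda>i. Tm adj M b u i + Tm adj M b w i)"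
  unfolding Tm_def by (simp add: mv_add sum.distrib)

lemma Tm_diff: "Tm adj M b (\<lambda>a i. u a i - w a i) = (\<lambda>i. Tm adj M b u i - Tm adj M b w i)"
  unfolding Tm_def by (simp add: mv_diff sum_subtractf)

lemma Tm_scale: "Tm adj M b (\<lambda>a i. c * u a i) = (\<lambda>i. c * Tm adj M b u i)"
  unfolding Tm_def by (simp add: mv_scale sum_distrib_left)

lemma Tm_zero: "Tm adj M b (\<lambda>a _. 0) = (\<lambda>_. 0)"
  unfolding Tm_def by (simp add: mv_zero)

lemma Tm_vecs: "rep_wf adj' snk M \<Longrightarrow> Tm adj M b u \<in> vecs (dim M b)"
  unfolding Tm_def vecs_def using mv_vecs[of adj' snk M b] by (auto simp: vecs_def)

lemma Tm_single:
  assumes "finite {a. adj a b}" "adj a b"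
  shows "Tm adj M b (\<lambda>a'. if a' = a then x else (\<lambda>_. 0)) = mv (mp M b a) (dim M a) x"
proof
  fix i
  have "Tm adj M b (\<lambda>a'. if a' = a then x else (\<lambda>_. 0)) i =
     (\<Sum>a'\<in>{a. adj a b}. if a' = a then mv (mp M b a) (dim M a) x i else 0)"
    unfolding Tm_def by (intro sum.cong) (auto simp: mv_zero)
  also have "\<dots> = mv (mp M b a) (dim M a) x i" using assms by (simp add: sum.delta)
  finally show "Tm adj M b (\<lambda>a'. if a' = a then x else (\<lambda>_. 0)) i = mv (mp M b a) (dim M a) x i" .
qed

lemma vecs_add: "x \<in> vecs d \<Longrightarrow> y \<in> vecs d \<Longrightarrow> (\<lambda>i. x i + y i) \<in> vecs d"
  by (simp add: vecs_def)

lemma vecs_diff: "x \<in> vecs d \<Longrightarrow> y \<in> vecs d \<Longrightarrow> (\<lambda>i. x i - y i) \<in> vecs d"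
  by (simp add: vecs_def)

lemma sub_diff: "subspace_of d U \<Longrightarrow> x \<in> U \<Longrightarrow> y \<in> U \<Longrightarrow> (\<lambda>i. x i - y i) \<in> U"
proof -
  assume s: "subspace_of d U" and x: "x \<in> U" and y: "y \<in> U"
  have "(\<lambda>i. (-1) * y i) \<in> U" using subD_scale[OF s y] .
  then have "(\<lambda>i. x i + (\<lambda>i. (-1) * y i) i) \<in> U" by (rule subD_add[OF s x])
  moreover have "(\<lambda>i. x i + (\<lambda>i. (-1) * y i) i) = (\<lambda>i. x i - y i)" by simp
  ultimately show ?thesis by simp
qed

lemma imgT_sub:
  assumes wf: "rep_wf adj' snk M" and V: "\<And>a. adj a b \<Longrightarrow> subspace_of (dim M a) (V a)"
  shows "subspace_of (dim M b) (imgT adj M V b)"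
proof (rule subI)
  show "imgT adj M V b \<subseteq> vecs (dim M b)"
  proof
    fix x assume x: "x \<in> imgT adj M V b"
    obtain u where "x = Tm adj M b u" using imgT_E[OF x] by blast
    then show "x \<in> vecs (dim M b)" using Tm_vecs[OF wf] by simp
  qed
  have "Tm adj M b (\<lambda>a _. 0) \<in> imgT adj M V b"
    by (rule imgT_mem, rule subD_0[OF V])
  then show "(\<lambda>_. 0) \<in> imgT adj M V b" by (simp add: Tm_zero)
next
  fix x y assume x: "x \<in> imgT adj M V b" and y: "y \<in> imgT adj M V b"
  obtain u where u: "x = Tm adj M b u" "\<forall>a. adj a b \<longrightarrow> u a \<in> V a" using imgT_E[OF x] by blast
  obtain w where w: "y = Tm adj M b w" "\<forall>a. adj a b \<longrightarrow> w a \<in> V a" using imgT_E[OF y] by blast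
  have "Tm adj M b (\<lambda>a i. u a i + w a i) \<in> imgT adj M V b"
  proof (rule imgT_mem)
    fix a assume "adj a b"
    then show "(\<lambda>i. u a i + w a i) \<in> V a" using subD_add[OF V[OF \<open>adj a b\<close>]] u(2) w(2) by simp
  qed
  then show "(\<lambda>i. x i + y i) \<in> imgT adj M V b" using u w by (simp add: Tm_add)
next
  fix c x assume x: "x \<in> imgT adj M V b"
  obtain u where u: "x = Tm adj M b u" "\<forall>a. adj a b \<longrightarrow> u a \<in> V a" using imgT_E[OF x] by blast
  have "Tm adj M b (\<lambda>a i. c * u a i) \<in> imgT adj M V b"
  proof (rule imgT_mem)
    fix a assume "adj a b"
    then show "(\<lambda>i. c * u a i) \<in> V a" using subD_scale[OF V[OF \<open>adj a b\<close>]] u(2) by simp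
  qed
  then show "(\<lambda>i. c * x i) \<in> imgT adj M V b" using u by (simp add: Tm_scale)
qed

lemma ssum_sub:
  assumes A: "subspace_of d A" and B: "subspace_of d B"
  shows "subspace_of d (ssum A B)"
proof (rule subI)
  show "ssum A B \<subseteq> vecs d"
  proof
    fix z assume z: "z \<in> ssum A B"
    obtain x y where "x \<in> A" "y \<in> B" "z = (\<lambda>i. x i + y i)" using ssum_E[OF z] by blast
    then show "z \<in> vecs d" using subD_sub[OF A] subD_sub[OF B] vecs_add by (metis subsetD)
  qed
  show "(\<lambda>_. 0) \<in> ssum A B" using ssum_mem[OF subD_0[OF A] subD_0[OF B]] by simp
next
  fix z z' assume z: "z \<in> ssum A B" and z': "z' \<in> ssum A B"
  obtain x y where xy: "x \<in> A" "y \<in> B" "z = (\<lambda>i. x i + y i)" using ssum_E[OF z] by blast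
  obtain x' y' where xy': "x' \<in> A" "y' \<in> B" "z' = (\<lambda>i. x' i + y' i)" using ssum_E[OF z'] by blast
  have "(\<lambda>i. (\<lambda>i. x i + x' i) i + (\<lambda>i. y i + y' i) i) \<in> ssum A B"
    by (rule ssum_mem[OF subD_add[OF A xy(1) xy'(1)] subD_add[OF B xy(2) xy'(2)]])
  then show "(\<lambda>i. z i + z' i) \<in> ssum A B" using xy xy' by (simp add: algebra_simps)
next
  fix c z assume z: "z \<in> ssum A B"
  obtain x y where xy: "x \<in> A" "y \<in> B" "z = (\<lambda>i. x i + y i)" using ssum_E[OF z] by blast
  have "(\<lambda>i. (\<lambda>i. c * x i) i + (\<lambda>i. c * y i) i) \<in> ssum A B"
    by (rule ssum_mem[OF subD_scale[OF A xy(1)] subD_scale[OF B xy(2)]])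
  then show "(\<lambda>i. c * z i) \<in> ssum A B" using xy by (simp add: algebra_simps)
qed


lemma shift_not_decomposable:
  fixes M N :: "('v, 'k::field) rep"
  assumes bip: "bipartite_orientation adj snk"
    and sym: "\<And>x y. adj x y \<Longrightarrow> adj y x"
    and fin: "\<And>b. finite {a. adj a b}"
    and wf: "rep_wf adj snk M" and sh: "shift adj snk M N" and ind: "indecomposable adj snk M"
  shows "\<not> decomposable adj (\<lambda>v. \<not> snk v) N"
proof
  assume "decomposable adj (\<lambda>v. \<not> snk v) N"
  then obtain U W where
    H1: "\<forall>a. subspace_of (dim N a) (U a) \<and> subspace_of (dim N a) (W a) \<and> U a \<inter> W a = {\<lambda>_. 0} \<and>
          (\<forall>x\<in>vecs (dim N a). \<exists>u\<in>U a. \<exists>w\<in>W a. x = (\<lambda>i. u i + w i))"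
    and H2: "\<forall>a b. arrow adj (\<lambda>v. \<not> snk v) a b \<longrightarrow>
          (\<forall>x\<in>U a. mv (mp N b a) (dim N a) x \<in> U b) \<and>
          (\<forall>x\<in>W a. mv (mp N b a) (dim N a) x \<in> W b)"
    and nzU: "\<exists>a. U a \<noteq> {\<lambda>_. 0}" and nzW: "\<exists>a. W a \<noteq> {\<lambda>_. 0}"
    unfolding decomposable_def by blast
  have dU: "\<And>a. subspace_of (dim N a) (U a)" "\<And>a. subspace_of (dim N a) (W a)"
        "\<And>a. U a \<inter> W a = {\<lambda>_. 0}"
        "\<And>a x. x \<in> vecs (dim N a) \<Longrightarrow> \<exists>u\<in>U a. \<exists>w\<in>W a. x = (\<lambda>i. u i + w i)"
    using H1 by blast+
  have aU: "\<And>a b x. arrow adj (\<lambda>v. \<not> snk v) a b \<Longrightarrow> x \<in> U a \<Longrightarrow> mv (mp N b a) (dim N a) x \<in> U b"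
    using H2 by blast
  have aW: "\<And>a b x. arrow adj (\<lambda>v. \<not> snk v) a b \<Longrightarrow> x \<in> W a \<Longrightarrow> mv (mp N b a) (dim N a) x \<in> W b"
    using H2 by blast
  have shN: "rep_wf adj (\<lambda>v. \<not> snk v) N" and dsrc: "\<And>a. \<not> snk a \<Longrightarrow> dim N a = dim M a"
    using sh unfolding shift_def by auto
  note S3 = conjunct2[OF conjunct2[OF sh[unfolded shift_def]], rule_format]
  have K1: "Tm adj M b (\<lambda>a. mv (mp N a b) (dim N b) y) = (\<lambda>_. 0)" if b: "snk b" and yv: "y \<in> vecs (dim N b)" for b y
    using bspec[OF conjunct1[OF S3[OF b]] yv] by (simp add: Tm_def)
  have K2: "y = (\<lambda>_. 0)" if b: "snk b" and yv: "y \<in> vecs (dim N b)"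
      and h: "\<forall>a. adj a b \<longrightarrow> mv (mp N a b) (dim N b) y = (\<lambda>_. 0)" for b y
    using bspec[OF conjunct1[OF conjunct2[OF S3[OF b]]] yv] h by simp
  have K3: "\<exists>y\<in>vecs (dim N b). \<forall>a. adj a b \<longrightarrow> mv (mp N a b) (dim N b) y = x a"
    if b: "snk b" and xv: "\<forall>a. adj a b \<longrightarrow> x a \<in> vecs (dim M a)" and T0: "Tm adj M b x = (\<lambda>_. 0)" for b x
  proof -
    have T0': "(\<lambda>i. \<Sum>a\<in>{a. adj a b}. mv (mp M b a) (dim M a) (x a) i) = (\<lambda>_. 0)"
      using T0 by (simp add: Tm_def)
    show ?thesis using spec[OF conjunct2[OF conjunct2[OF S3[OF b]]], of x] xv T0' by blast
  qed
  have nbsrc: "\<not> snk a" if "adj a b" "snk b" for a b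
    using bip that unfolding bipartite_orientation_def by blast
  have arrN: "arrow adj (\<lambda>v. \<not> snk v) b a" if "adj a b" "snk b" for a b
    using that nbsrc sym unfolding arrow_def by blast
  have USsrc: "subspace_of (dim M a) (U a)" "subspace_of (dim M a) (W a)" if "\<not> snk a" for a
    using dU(1,2)[of a] dsrc[OF that] by auto
  define full where "full b = imgT adj M (\<lambda>a. vecs (dim M a)) b" for b
  have fullsub: "subspace_of (dim M b) (full b)" for b
    unfolding full_def by (rule imgT_sub[OF wf subspace_vecs])
  have "\<forall>b. \<exists>C. subspace_of (dim M b) C \<and> full b \<inter> C = {\<lambda>_. 0} \<and>
     (\<forall>x\<in>vecs (dim M b). \<exists>i\<in>full b. \<exists>c\<in>C. x = (\<lambda>j. i j + c j))"
    using complement[OF fullsub] by blast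
  then have "\<exists>Cf. \<forall>b. subspace_of (dim M b) (Cf b) \<and> full b \<inter> Cf b = {\<lambda>_. 0} \<and>
     (\<forall>x\<in>vecs (dim M b). \<exists>i\<in>full b. \<exists>c\<in>Cf b. x = (\<lambda>j. i j + c j))"
    by (rule choice)
  then obtain Cf where Cf: "\<And>b. subspace_of (dim M b) (Cf b)" "\<And>b. full b \<inter> Cf b = {\<lambda>_. 0}"
     "\<And>b x. x \<in> vecs (dim M b) \<Longrightarrow> \<exists>i\<in>full b. \<exists>c\<in>Cf b. x = (\<lambda>j. i j + c j)"
    by blast
  define U' where "U' v = (if snk v then ssum (imgT adj M U v) (Cf v) else U v)" for v
  define W' where "W' v = (if snk v then imgT adj M W v else W v)" for v
  have imgU_sub: "subspace_of (dim M b) (imgT adj M U b)" if "snk b" for b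
    by (rule imgT_sub[OF wf]) (use USsrc nbsrc that in blast)
  have imgW_sub: "subspace_of (dim M b) (imgT adj M W b)" if "snk b" for b
    by (rule imgT_sub[OF wf]) (use USsrc nbsrc that in blast)
  have G1: "subspace_of (dim M v) (U' v)" "subspace_of (dim M v) (W' v)" for v
    unfolding U'_def W'_def using ssum_sub[OF imgU_sub Cf(1)] imgW_sub USsrc by auto
  have G2: "U' v \<inter> W' v = {\<lambda>_. 0}" for v
  proof (cases "snk v")
    case False
    then show ?thesis unfolding U'_def W'_def using dU(3) by simp
  next
    case True
    note b = True
    show ?thesis
    proof
      show "{\<lambda>_. 0} \<subseteq> U' v \<inter> W' v" using subD_0[OF G1(1)] subD_0[OF G1(2)] by simp
      show "U' v \<inter> W' v \<subseteq> {\<lambda>_. 0}"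
      proof
        fix x assume x: "x \<in> U' v \<inter> W' v"
        then have xU: "x \<in> ssum (imgT adj M U v) (Cf v)" and xW: "x \<in> imgT adj M W v"
          using b unfolding U'_def W'_def by auto
        obtain s c where sc: "s \<in> imgT adj M U v" "c \<in> Cf v" "x = (\<lambda>i. s i + c i)"
          using ssum_E[OF xU] by blast
        obtain u where u: "s = Tm adj M v u" "\<forall>a. adj a v \<longrightarrow> u a \<in> U a" using imgT_E[OF sc(1)] by blast
        obtain w where w: "x = Tm adj M v w" "\<forall>a. adj a v \<longrightarrow> w a \<in> W a" using imgT_E[OF xW] by blast
        have uv: "u a \<in> vecs (dim M a)" "w a \<in> vecs (dim M a)" if "adj a v" for a
          using u(2) w(2) that subD_sub[OF USsrc(1)] subD_sub[OF USsrc(2)] nbsrc[OF that b] by blast+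
        have ceq: "c = Tm adj M v (\<lambda>a i. w a i - u a i)"
          unfolding Tm_diff using sc(3) u(1) w(1) by (auto simp: fun_eq_iff)
        have "c \<in> full v" unfolding ceq full_def
          by (rule imgT_mem) (use uv vecs_diff in blast)
        then have c0: "c = (\<lambda>_. 0)" using Cf(2)[of v] sc(2) by blast
        have "Tm adj M v (\<lambda>a i. u a i - w a i) = (\<lambda>_. 0)"
          unfolding Tm_diff using c0 ceq unfolding Tm_diff by (auto simp: fun_eq_iff)
        then obtain y where y: "y \<in> vecs (dim N v)"
          "\<And>a. adj a v \<Longrightarrow> mv (mp N a v) (dim N v) y = (\<lambda>i. u a i - w a i)"
          using K3[OF b, of "\<lambda>a i. u a i - w a i"] uv vecs_diff by blast
        obtain yU yW where yUW: "yU \<in> U v" "yW \<in> W v" "y = (\<lambda>i. yU i + yW i)"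
          using dU(4)[OF y(1)] by blast
        have ueq: "u a = mv (mp N a v) (dim N v) yU" if a: "adj a v" for a
        proof -
          have ar: "arrow adj (\<lambda>v. \<not> snk v) v a" using arrN[OF a b] .
          define p where "p = mv (mp N a v) (dim N v) yU"
          define q where "q = mv (mp N a v) (dim N v) yW"
          have pU: "p \<in> U a" unfolding p_def using aU[OF ar yUW(1)] .
          have qW: "q \<in> W a" unfolding q_def using aW[OF ar yUW(2)] .
          have sum: "(\<lambda>i. u a i - w a i) = (\<lambda>i. p i + q i)"
            using y(2)[OF a] unfolding yUW(3) mv_add p_def q_def by simp
          have l: "(\<lambda>i. u a i - p i) \<in> U a" using sub_diff[OF dU(1) _ pU] u(2) a by blast
          have r: "(\<lambda>i. w a i + q i) \<in> W a" using subD_add[OF dU(2) _ qW] w(2) a by blast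
          have "(\<lambda>i. u a i - p i) = (\<lambda>i. w a i + q i)"
          proof
            fix i
            have "u a i - w a i = p i + q i" using fun_cong[OF sum, of i] by simp
            then show "u a i - p i = w a i + q i" by (simp add: algebra_simps)
          qed
          then have "(\<lambda>i. u a i - p i) \<in> U a \<inter> W a" using l r by simp
          then have "(\<lambda>i. u a i - p i) = (\<lambda>_. 0)" using dU(3)[of a] by blast
          then show ?thesis unfolding p_def[symmetric] by (auto simp: fun_eq_iff)
        qed
        have yUv: "yU \<in> vecs (dim N v)" using subD_sub[OF dU(1)] yUW(1) by blast
        have "s = Tm adj M v (\<lambda>a. mv (mp N a v) (dim N v) yU)"
          unfolding u(1) by (rule Tm_cong) (rule ueq)
        then have "s = (\<lambda>_. 0)" using K1[OF b yUv] by simp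
        then show "x \<in> {\<lambda>_. 0}" using sc(3) c0 by simp
      qed
    qed
  qed
  have G3: "\<exists>u\<in>U' v. \<exists>w\<in>W' v. x = (\<lambda>i. u i + w i)" if x: "x \<in> vecs (dim M v)" for v x
  proof (cases "snk v")
    case False
    then show ?thesis unfolding U'_def W'_def using dU(4) x dsrc[OF False] by simp
  next
    case True
    note b = True
    obtain i c where ic: "i \<in> full v" "c \<in> Cf v" "x = (\<lambda>j. i j + c j)" using Cf(3)[OF x] by blast
    obtain z where z: "i = Tm adj M v z" "\<forall>a. adj a v \<longrightarrow> z a \<in> vecs (dim M a)"
      using imgT_E[OF ic(1)[unfolded full_def]] by blast
    have "\<forall>a. \<exists>uw. adj a v \<longrightarrow> fst uw \<in> U a \<and> snd uw \<in> W a \<and> z a = (\<lambda>i. fst uw i + snd uw i)"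
    proof
      fix a
      show "\<exists>uw. adj a v \<longrightarrow> fst uw \<in> U a \<and> snd uw \<in> W a \<and> z a = (\<lambda>i. fst uw i + snd uw i)"
      proof (cases "adj a v")
        case True
        have "z a \<in> vecs (dim N a)" using z(2) True dsrc[OF nbsrc[OF True b]] by simp
        then obtain u w where "u \<in> U a" "w \<in> W a" "z a = (\<lambda>i. u i + w i)" using dU(4) by blast
        then show ?thesis by (intro exI[of _ "(u, w)"]) simp
      qed simp
    qed
    then obtain uw where uw: "\<And>a. adj a v \<Longrightarrow> fst (uw a) \<in> U a \<and> snd (uw a) \<in> W a \<and>
         z a = (\<lambda>i. fst (uw a) i + snd (uw a) i)"
      using choice by metis
    define uu where "uu a = fst (uw a)" for a
    define ww where "ww a = snd (uw a)" for a
    have "i = Tm adj M v (\<lambda>a i. uu a i + ww a i)"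
      unfolding z(1) uu_def ww_def by (rule Tm_cong) (use uw in blast)
    then have ieq: "i = (\<lambda>j. Tm adj M v uu j + Tm adj M v ww j)" by (simp add: Tm_add)
    have m1: "Tm adj M v uu \<in> imgT adj M U v"
    proof (rule imgT_mem)
      fix a assume "adj a v" then show "uu a \<in> U a" using uw unfolding uu_def by blast
    qed
    have m2: "Tm adj M v ww \<in> imgT adj M W v"
    proof (rule imgT_mem)
      fix a assume "adj a v" then show "ww a \<in> W a" using uw unfolding ww_def by blast
    qed
    have mU: "(\<lambda>j. Tm adj M v uu j + c j) \<in> U' v" unfolding U'_def using b ssum_mem[OF m1 ic(2)] by simp
    have mW: "Tm adj M v ww \<in> W' v" unfolding W'_def using b m2 by simp
    have eq: "x = (\<lambda>j. (\<lambda>j. Tm adj M v uu j + c j) j + Tm adj M v ww j)"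
      using ic(3) ieq by (auto simp: fun_eq_iff algebra_simps)
    show ?thesis
      apply (rule bexI[where x="\<lambda>j. Tm adj M v uu j + c j", OF _ mU])
      apply (rule bexI[where x="Tm adj M v ww", OF _ mW])
      by (rule eq)
  qed
  have G4: "mv (mp M b a) (dim M a) x \<in> U' b" "mv (mp M b a) (dim M a) y \<in> W' b"
    if ar: "arrow adj snk a b" and x: "x \<in> U' a" and y: "y \<in> W' a" for a b x y
  proof -
    have ab: "adj a b" "snk b" using ar unfolding arrow_def by auto
    have sa: "\<not> snk a" using nbsrc[OF ab] .
    have xU: "x \<in> U a" and yW: "y \<in> W a" using x y sa unfolding U'_def W'_def by auto
    have m1: "Tm adj M b (\<lambda>a'. if a' = a then x else (\<lambda>_. 0)) \<in> imgT adj M U b"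
    proof (rule imgT_mem)
      fix a' assume "adj a' b"
      show "(if a' = a then x else (\<lambda>_. 0)) \<in> U a'" using xU subD_0[OF dU(1)] by simp
    qed
    have m2: "Tm adj M b (\<lambda>a'. if a' = a then y else (\<lambda>_. 0)) \<in> imgT adj M W b"
    proof (rule imgT_mem)
      fix a' assume "adj a' b"
      show "(if a' = a then y else (\<lambda>_. 0)) \<in> W a'" using yW subD_0[OF dU(2)] by simp
    qed
    have "(\<lambda>i. mv (mp M b a) (dim M a) x i + (\<lambda>_. 0) i) \<in> ssum (imgT adj M U b) (Cf b)"
      using ssum_mem[OF m1[unfolded Tm_single[where adj=adj and b=b and a=a, OF fin[of b] ab(1)]] subD_0[OF Cf(1)]] .
    then show "mv (mp M b a) (dim M a) x \<in> U' b" unfolding U'_def using ab by simp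
    show "mv (mp M b a) (dim M a) y \<in> W' b" unfolding W'_def using ab m2[unfolded Tm_single[where adj=adj and b=b and a=a, OF fin[of b] ab(1)]] by simp
  qed
  have nz: "\<exists>a. \<not> snk a \<and> V a \<noteq> {\<lambda>_. 0}"
    if nzV: "\<exists>a. V a \<noteq> {\<lambda>_. 0}" and sV: "\<And>a. subspace_of (dim N a) (V a)"
      and aV: "\<And>a b x. arrow adj (\<lambda>v. \<not> snk v) a b \<Longrightarrow> x \<in> V a \<Longrightarrow> mv (mp N b a) (dim N a) x \<in> V b"
    for V
  proof -
    obtain a where a: "V a \<noteq> {\<lambda>_. 0}" using nzV by blast
    show ?thesis
    proof (cases "snk a")
      case False then show ?thesis using a by blast
    next
      case True
      obtain y where y: "y \<in> V a" "y \<noteq> (\<lambda>_. 0)" using a subD_0[OF sV] by blast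
      have yv: "y \<in> vecs (dim N a)" using subD_sub[OF sV] y(1) by blast
      obtain a' where a': "adj a' a" "mv (mp N a' a) (dim N a) y \<noteq> (\<lambda>_. 0)"
        using K2[OF True yv] y(2) by blast
      have "mv (mp N a' a) (dim N a) y \<in> V a'" using aV[OF arrN[OF a' (1) True] y(1)] .
      then show ?thesis using a' nbsrc[OF a'(1) True] by blast
    qed
  qed
  obtain a1 where a1: "\<not> snk a1" "U a1 \<noteq> {\<lambda>_. 0}" using nz[OF nzU dU(1) aU] by blast
  obtain a2 where a2: "\<not> snk a2" "W a2 \<noteq> {\<lambda>_. 0}" using nz[OF nzW dU(2) aW] by blast
  have "decomposable adj snk M"
    unfolding decomposable_def
    apply (rule exI[of _ U'], rule exI[of _ W'], intro conjI)
    subgoal using G1 G2 G3 by blast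
    subgoal
    proof (intro allI impI conjI ballI)
      fix a b x assume ar: "arrow adj snk a b"
      show "x \<in> U' a \<Longrightarrow> mv (mp M b a) (dim M a) x \<in> U' b"
        using G4(1)[OF ar _ subD_0[OF G1(2)]] by blast
      show "x \<in> W' a \<Longrightarrow> mv (mp M b a) (dim M a) x \<in> W' b"
        using G4(2)[OF ar subD_0[OF G1(1)]] by blast
    qed
    subgoal using a1 by (intro exI[of _ a1]) (simp add: U'_def)
    subgoal using a2 by (intro exI[of _ a2]) (simp add: W'_def)
    done
  then show False using ind unfolding indecomposable_def by simp
qed


lemma kernel_nonzero:
  fixes M N :: "('v, 'k::field) rep"
  assumes sh: "shift adj snk M N" and wf: "rep_wf adj snk M" and b: "snk b"
    and Mb: "dim M b = 0" and ab: "adj a b" and Ma: "dim M a \<noteq> 0"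
  shows "dim N b \<noteq> 0"
proof
  assume Nb: "dim N b = 0"
  note S3 = conjunct2[OF conjunct2[OF sh[unfolded shift_def]], rule_format]
  define e0 where "e0 = (\<lambda>i::nat. if i = 0 then (1::'k) else 0)"
  define x where "x = (\<lambda>a'. if a' = a then e0 else (\<lambda>_. 0))"
  have xv: "\<forall>a'. adj a' b \<longrightarrow> x a' \<in> vecs (dim M a')"
    using e0_vecs[OF Ma] unfolding x_def e0_def by auto
  have mv0: "mv (mp M b a') (dim M a') z = (\<lambda>_. 0)" for a' z
  proof -
    have "mp M b a' i j = 0" for i j using wf Mb unfolding rep_wf_def by auto
    then show ?thesis by (simp add: mv_def)
  qed
  have "(\<lambda>i. \<Sum>a\<in>{a. adj a b}. mv (mp M b a) (dim M a) (x a) i) = (\<lambda>_. 0)"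
    by (simp add: mv0)
  then obtain y where "y \<in> vecs (dim N b)" "\<forall>a'. adj a' b \<longrightarrow> mv (mp N a' b) (dim N b) y = x a'"
    using spec[OF conjunct2[OF conjunct2[OF S3[OF b]]], of x] xv by blast
  then have "mv (mp N a b) (dim N b) y = e0" using ab unfolding x_def by simp
  then have "(\<lambda>_. 0) = e0" using Nb by (simp add: mv_dim0)
  then have "e0 0 = 0" by (metis)
  then show False unfolding e0_def by simp
qed

lemma pick3: "finite A \<Longrightarrow> card A \<ge> 3 \<Longrightarrow> \<exists>z\<in>A. z \<noteq> x \<and> z \<noteq> y"
proof (rule ccontr)
  assume f: "finite A" and c: "card A \<ge> 3" and n: "\<not> (\<exists>z\<in>A. z \<noteq> x \<and> z \<noteq> y)"
  then have "A \<subseteq> {x, y}" by blast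
  then have "card A \<le> card {x, y}" by (rule card_mono[rotated]) simp
  also have "\<dots> \<le> 2" by (simp add: card_insert_if)
  finally show False using c by simp
qed


theorem mainTheorem9:
  fixes adj :: "'v \<Rightarrow> 'v \<Rightarrow> bool" and n :: nat and snk :: "'v \<Rightarrow> bool"
    and M N :: "('v, 'k::field) rep" and c :: 'v and r :: nat
  assumes "n \<ge> 3"
    and "regular_tree adj n"
    and "bipartite_orientation adj snk"
    and "rep_wf adj snk M"
    and "regular adj snk M"
    and "source_module adj snk M c r"
    and "shift adj snk M N"
  shows "source_module adj (\<lambda>v. \<not> snk v) N c (r + 1)"
proof -
  note n3 = assms(1) and tree = assms(2) and bip = assms(3) and wf = assms(4)
    and reg = assms(5) and smM = assms(6) and sh = assms(7)
  have sym: "\<And>x y. adj x y \<Longrightarrow> adj y x" using tree unfolding regular_tree_def by blast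
  have finN: "finite {b. adj a b}" and cardN: "card {b. adj a b} = n" for a
    using tree unfolding regular_tree_def by auto
  have finN': "finite {a. adj a b}" for b
  proof -
    have "{a. adj a b} = {a. adj b a}" using sym by blast
    then show ?thesis using finN by simp
  qed
  have bipD: "snk x \<noteq> snk y" if "adj x y" for x y
    using bip that unfolding bipartite_orientation_def by blast
  have indM: "indecomposable adj snk M" using reg unfolding regular_def by blast
  have wfN: "rep_wf adj (\<lambda>v. \<not> snk v) N" and dsrc: "\<And>a. \<not> snk a \<Longrightarrow> dim N a = dim M a"
    using sh unfolding shift_def by auto
  obtain p where dp: "diam_path adj M p" using smM unfolding source_module_def by blast
  have smD: "length q = 2 * r + 1 \<and> q ! r = c \<and> \<not> snk (hd q) \<and> \<not> snk (last q)"
    if "diam_path adj M q" for q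
    using smM that unfolding source_module_def by blast
  have lenp: "length p = 2 * r + 1" and hdp: "\<not> snk (hd p)" and lastp: "\<not> snk (last p)"
    using smD[OF dp] by auto
  have tpM: "tpath adj M p" using dp unfolding diam_path_def by blast
  have maxM: "length q \<le> 2 * r + 1" if "tpath adj M q" for q
    using dp that lenp unfolding diam_path_def by auto
  have pathp: "is_path adj p" and suppM: "\<And>v. v \<in> set p \<Longrightarrow> dim M v \<noteq> 0"
    using tpM unfolding tpath_def by auto
  have ipp: "ip adj p" using pathp is_path_ip by metis
  have pne: "p \<noteq> []" using lenp by auto
  obtain b0 where b0: "b0 \<in> {b. adj (hd p) b}" "b0 \<noteq> p ! 1"
    using pick3[OF finN, of "hd p" "p ! 1" "p ! 1"] cardN n3 by auto
  obtain b1 where b1: "b1 \<in> {b. adj (last p) b}" "b1 \<noteq> b0" "b1 \<noteq> last (butlast p)"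
    using pick3[OF finN, of "last p" b0 "last (butlast p)"] cardN n3 by auto
  have ip0: "ip adj (b0 # p)"
    by (rule ip_Cons[OF ipp]) (use b0 sym in auto)
  have ip1: "ip adj (p @ [b1])"
    by (rule ip_snoc[OF ipp]) (use b1 in auto)
  have Mb0: "dim M b0 = 0"
  proof (rule ccontr)
    assume "dim M b0 \<noteq> 0"
    then have "tpath adj M (b0 # p)" using ip0 suppM unfolding tpath_def is_path_ip by auto
    then show False using maxM lenp by fastforce
  qed
  have Mb1: "dim M b1 = 0"
  proof (rule ccontr)
    assume "dim M b1 \<noteq> 0"
    then have "tpath adj M (p @ [b1])" using ip1 suppM unfolding tpath_def is_path_ip by auto
    then show False using maxM lenp by fastforce
  qed
  have sb0: "snk b0" using bipD[of "hd p" b0] b0 hdp by auto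
  have sb1: "snk b1" using bipD[of "last p" b1] b1 lastp by auto
  have Nb0: "dim N b0 \<noteq> 0"
    by (rule kernel_nonzero[OF sh wf sb0 Mb0, of "hd p"]) (use b0 sym suppM pne in auto)
  have Nb1: "dim N b1 \<noteq> 0"
    by (rule kernel_nonzero[OF sh wf sb1 Mb1, of "last p"]) (use b1 sym suppM pne in auto)
  have nd: "\<not> decomposable adj (\<lambda>v. \<not> snk v) N"
    apply (rule shift_not_decomposable[OF bip _ finN' wf sh indM])
    by (rule sym)
  have indN: "indecomposable adj (\<lambda>v. \<not> snk v) N"
    unfolding indecomposable_def zero_rep_def
  proof (intro conjI)
    show "\<not> (\<forall>a. dim N a = 0)"
      using Nb0 by (intro notI) (drule spec[of _ b0], simp)
    show "\<not> decomposable adj (\<lambda>v. \<not> snk v) N" using nd by assumption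
  qed
  have connM: "reach adj (\<lambda>v. dim M v \<noteq> 0) u w" if "dim M u \<noteq> 0" "dim M w \<noteq> 0" for u w
    by (rule connected_support[OF wf indM sym that])
  have connN: "reach adj (\<lambda>v. dim N v \<noteq> 0) u w" if "dim N u \<noteq> 0" "dim N w \<noteq> 0" for u w
    by (rule connected_support[OF wfN indN sym that])
  have inner: "dim P (q ! j) \<noteq> 0"
    if P_conn: "\<And>u w. dim P u \<noteq> 0 \<Longrightarrow> dim P w \<noteq> 0 \<Longrightarrow> reach adj (\<lambda>v. dim P v \<noteq> 0) u w"
      and q: "is_path adj q" and j: "0 < j" "j + 1 < length q" and sj: "snk (q ! j)"
      and nb: "\<And>v. \<not> snk v \<Longrightarrow> v \<in> set q \<Longrightarrow> dim P v \<noteq> 0"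
    for P :: "('v, 'k) rep" and q j
  proof
    assume z: "dim P (q ! j) = 0"
    obtain i where i: "j = Suc i" using j(1) by (cases j) auto
    have a1: "adj (q ! i) (q ! j)" "adj (q ! j) (q ! Suc j)" "q ! i \<noteq> q ! Suc j"
      using q j unfolding is_path_def i by auto
    have s1: "\<not> snk (q ! i)" "\<not> snk (q ! Suc j)" using bipD a1 sj by metis+
    have P1: "dim P (q ! i) \<noteq> 0" "dim P (q ! Suc j) \<noteq> 0"
      using nb s1 j i by auto
    show False
      using no_cycle[OF tree, of "\<lambda>v. dim P v \<noteq> 0" "q ! j" "q ! i" "q ! Suc j"]
        z sym[OF a1(1)] a1(2,3) P1 P_conn[OF P1] by blast
  qed
  have suppN: "dim N v \<noteq> 0" if v: "v \<in> set p" for v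
  proof -
    obtain j where j: "j < length p" "v = p ! j" using v by (auto simp: in_set_conv_nth)
    show ?thesis
    proof (cases "snk v")
      case False
      then show ?thesis using dsrc suppM v by simp
    next
      case True
      have "j \<noteq> 0"
      proof
        assume "j = 0" then show False using True hdp j pne by (simp add: hd_conv_nth)
      qed
      moreover have "j + 1 \<noteq> length p"
      proof
        assume jj: "j + 1 = length p"
        have "length p - 1 = j" using jj by simp
        then have "last p = p ! j" using pne by (simp add: last_conv_nth)
        then show False using True lastp j by simp
      qed
      ultimately show ?thesis
        using inner[OF connN pathp, of j] j True dsrc suppM by auto
    qed
  qed
  define q0 where "q0 = b0 # p @ [b1]"
  have ipq0: "ip adj q0" unfolding q0_def
  proof (rule ip_Cons[OF ip1])
    show "adj b0 (hd (p @ [b1]))" using b0 pne sym by simp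
    show "(p @ [b1]) ! 1 \<noteq> b0"
    proof (cases "length p \<ge> 2")
      case True then show ?thesis using b0 by (simp add: nth_append)
    next
      case False
      moreover have "length p \<noteq> 0" using pne by simp
      ultimately have "length p = 1" by linarith
      then show ?thesis using b1 by (simp add: nth_append)
    qed
  qed
  have tq0: "tpath adj N q0"
    unfolding tpath_def q0_def using ipq0 Nb0 Nb1 suppN
    unfolding q0_def is_path_ip by auto
  have lq0: "length q0 = 2 * (r + 1) + 1" unfolding q0_def using lenp by simp
  have maxN: "length q \<le> 2 * (r + 1) + 1 \<and> (length q = 2 * (r + 1) + 1 \<longrightarrow>
       q ! (r + 1) = c \<and> snk (hd q) \<and> snk (last q))" if tq: "tpath adj N q" for q
  proof (cases "length q \<ge> 3")
    case False
    then show ?thesis by auto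
  next
    case True
    define L where "L = length q"
    have qp: "is_path adj q" and qs: "\<And>v. v \<in> set q \<Longrightarrow> dim N v \<noteq> 0"
      using tq unfolding tpath_def by auto
    define q' where "q' = butlast (tl q)"
    have lq': "length q' = L - 2" unfolding q'_def L_def by simp
    have nth': "q' ! i = q ! Suc i" if "i < L - 2" for i
      unfolding q'_def using that True unfolding L_def by (simp add: nth_butlast nth_tl)
    have pq': "is_path adj q'"
      unfolding is_path_def
    proof (intro conjI allI impI)
      show "q' \<noteq> []" using lq' True L_def by auto
      fix i
      show "adj (q' ! i) (q' ! Suc i)" if "Suc i < length q'"
        using that qp nth' lq' unfolding is_path_def L_def by auto
      show "q' ! i \<noteq> q' ! Suc (Suc i)" if "Suc (Suc i) < length q'"
        using that qp nth' lq' unfolding is_path_def L_def by auto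
    qed
    have sq': "dim M v \<noteq> 0" if v: "v \<in> set q'" for v
    proof -
      obtain i where i: "i < L - 2" "v = q' ! i" using v lq' by (auto simp: in_set_conv_nth)
      have vq: "v = q ! Suc i" using nth' i by simp
      show ?thesis
      proof (cases "snk v")
        case False
        have "Suc i < length q" using i L_def by simp
        then have "q ! Suc i \<in> set q" by simp
        then have "dim N v \<noteq> 0" using qs vq by blast
        then show ?thesis using dsrc[OF False] by simp
      next
        case True
        have nbM: "dim M w \<noteq> 0" if "\<not> snk w" "w \<in> set q" for w
          using dsrc[OF that(1)] qs[OF that(2)] by simp
        show ?thesis
          using inner[OF connM qp, of "Suc i"] i True vq nbM L_def by auto
      qed
    qed
    have tq': "tpath adj M q'" unfolding tpath_def using pq' sq' by blast
    have le: "L - 2 \<le> 2 * r + 1" using maxM[OF tq'] lq' by simp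
    show ?thesis
    proof (intro conjI impI)
      show "length q \<le> 2 * (r + 1) + 1" using le L_def by simp
      assume eq: "length q = 2 * (r + 1) + 1"
      have dq': "diam_path adj M q'" unfolding diam_path_def
        using tq' maxM lq' eq L_def by auto
      note sm' = smD[OF dq']
      show "q ! (r + 1) = c" using sm' nth'[of r] eq L_def by simp
      have q'ne: "q' \<noteq> []" using lq' eq L_def by auto
      have A: "\<forall>i. Suc i < length q \<longrightarrow> adj (q ! i) (q ! Suc i)" using qp unfolding is_path_def by blast
      have h1: "hd q' = q ! 1" using q'ne nth'[of 0] eq L_def by (simp add: hd_conv_nth)
      have h2: "adj (q ! 0) (q ! Suc 0)" using A eq by simp
      have h3: "hd q = q ! 0" using eq by (cases q) auto
      have "snk (q ! 0) \<noteq> snk (q ! Suc 0)" by (rule bipD[OF h2])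
      then show "snk (hd q)" using sm' h1 h3 by simp
      have l1: "last q' = q ! Suc (L - 3)" using q'ne nth'[of "L - 3"] eq L_def lq'
        by (simp add: last_conv_nth)
      have l2: "adj (q ! Suc (L - 3)) (q ! Suc (Suc (L - 3)))" using A eq L_def by simp
      have qne: "q \<noteq> []" using eq by auto
      have l3: "last q = q ! Suc (Suc (L - 3))" using last_conv_nth[OF qne] eq L_def by simp
      have "snk (q ! Suc (L - 3)) \<noteq> snk (q ! Suc (Suc (L - 3)))" by (rule bipD[OF l2])
      then show "snk (last q)" using sm' l1 l3 by simp
    qed
  qed
  have dq0: "diam_path adj N q0" unfolding diam_path_def using tq0 maxN lq0 by auto
  show ?thesis
    unfolding source_module_def
  proof (intro conjI allI impI exI)
    show "indecomposable adj (\<lambda>v. \<not> snk v) N" by (rule indN)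
    show "diam_path adj N q0" by (rule dq0)
    fix q assume dq: "diam_path adj N q"
    have tq: "tpath adj N q" using dq unfolding diam_path_def by blast
    have "length q0 \<le> length q" using dq tq0 unfolding diam_path_def by blast
    then have lq: "length q = 2 * (r + 1) + 1" using maxN[OF tq] lq0 by simp
    show "length q = 2 * (r + 1) + 1" by (rule lq)
    show "q ! (r + 1) = c" using maxN[OF tq] lq by simp
    show "\<not> \<not> snk (hd q)" using maxN[OF tq] lq by simp
    show "\<not> \<not> snk (last q)" using maxN[OF tq] lq by simp
  qed
qed

end
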